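(* Let $d\ge1$ be fixed, let $P$ be a set of $n\ge2$ points in $\mathbb{R}^d$ with spread $\Phi$, and let $\varepsilon\in(0,1/2)$. Let $p_1,\dots,p_n$ be a greedy permutation of $P$ with radii $r_1\ge r_2\ge\cdots$, let $F_i$ be the friend lists, and let $G=(P,E)$ be the directed graph with $E=\{p_j\to p_i : p_j\in F_i,\ i=1,\dots,n\}$, as defined in the context. Then for every query point $q\in\mathbb{R}^d$, the greedy routing procedure described in the context (starting from $p_1$) returns a point $p\in P$ with $d(q,p)\le(1+\varepsilon)\min_{p'\in P}d(q,p')$, and the query time is $O(\varepsilon^{-d-1}\log^2\Phi)$.
   Context: Distances are Euclidean. The spread $\Phi$ of $P$ is the ratio of the largest to the smallest pairwise distance in $P$. Greedy permutation: $p_1\in P$ is arbitrary; for $i\ge2$, $p_i$ is a point of $P\setminus P_{i-1}$ furthest from $P_{i-1}=\{p_1,\dots,p_{i-1}\}$, i.e., maximizing $d(p,P_{i-1})=\min_{x\in P_{i-1}}d(p,x)$. The radii are $r_1=\max_{p\in P}d(p,p_1)$ and, for $i\ge2$, $r_{i-1}=d(p_i,P_{i-1})$. The friend list of $p_i$ ($i\ge2$) is $F_i=P_{i-1}\cap\{x: d(x,p_i)\le 8r_{i-1}/\varepsilon\}$, and $F_1=\emptyset$. In $G$ the outgoing edges of each vertex are stored sorted by increasing index of the destination. Greedy routing for $q$: set the current vertex $c=p_1$; scan the outgoing edges $c\to p_j$ of $c$ in increasing order of $j$, and as soon as an edge with $d(q,p_j)\le(1-\varepsilon/4)d(q,c)$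 is found, set $c=p_j$ and restart scanning the outgoing edges of the new $c$; when all outgoing edges of $c$ are scanned without such a move, return $c$. The constants in the $O(\cdot)$ notation depend only on $d$. *)

theory Defs
  imports "HOL-Analysis.Analysis"
begin

text \<open>Points are indexed 1..n via a function p :: nat => 'a (p i = p_i).
  P_{i-1} = p ` {1..<i}.  Distances are Euclidean (dist).\<close>

definition spread :: "'a::metric_space set \<Rightarrow> real" where
  "spread P = Max {dist x y | x y. x \<in> P \<and> y \<in> P \<and> x \<noteq> y}
             / Min {dist x y | x y. x \<in> P \<and> y \<in> P \<and> x \<noteq> y}"

definition greedy_perm :: "'a::metric_space set \<Rightarrow> (nat \<Rightarrow> 'a) \<Rightarrow> bool" where
  "greedy_perm P p \<longleftrightarrow> bij_betw p {1..card P} P \<and>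
     (\<forall>i \<in> {2..card P}. \<forall>x \<in> P - p ` {1..<i}.
        infdist x (p ` {1..<i}) \<le> infdist (p i) (p ` {1..<i}))"

text \<open>Radii: r_1 = max_{x in P} d(x,p_1); r_{i-1} = d(p_i, P_{i-1}) for i >= 2.\<close>
definition greedy_radius :: "'a::metric_space set \<Rightarrow> (nat \<Rightarrow> 'a) \<Rightarrow> nat \<Rightarrow> real" where
  "greedy_radius P p j =
     (if j = 1 then Max ((\<lambda>x. dist x (p 1)) ` P)
      else infdist (p (Suc j)) (p ` {1..j}))"

definition friend_list :: "'a::metric_space set \<Rightarrow> (nat \<Rightarrow> 'a) \<Rightarrow> real \<Rightarrow> nat \<Rightarrow> 'a set" where
  "friend_list P p \<epsilon> i =
     (if i = 1 then {}
      else {x \<in> p ` {1..<i}. dist x (p i) \<le> 8 * greedy_radius P p (i - 1) / \<epsilon>})"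

text \<open>Outgoing edges p_j -> p_i of p_j in G, as the list of destination indices i,
  sorted increasingly.\<close>
definition out_edges :: "'a::metric_space set \<Rightarrow> (nat \<Rightarrow> 'a) \<Rightarrow> real \<Rightarrow> nat \<Rightarrow> nat list" where
  "out_edges P p \<epsilon> j = filter (\<lambda>i. p j \<in> friend_list P p \<epsilon> i) [1..<Suc (card P)]"

definition improves :: "(nat \<Rightarrow> 'a::metric_space) \<Rightarrow> real \<Rightarrow> 'a \<Rightarrow> nat \<Rightarrow> nat \<Rightarrow> bool" where
  "improves p \<epsilon> q c i \<longleftrightarrow> dist q (p i) \<le> (1 - \<epsilon> / 4) * dist q (p c)"

text \<open>greedy_route P p eps q c r t: greedy routing for query q started at the vertex
  with index c returns the vertex with index r, at cost t, where the cost counts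
  one unit per visited vertex plus one unit per scanned edge.\<close>
inductive greedy_route ::
  "'a::metric_space set \<Rightarrow> (nat \<Rightarrow> 'a) \<Rightarrow> real \<Rightarrow> 'a \<Rightarrow> nat \<Rightarrow> nat \<Rightarrow> nat \<Rightarrow> bool"
  for P p \<epsilon> q where
  stop: "\<not> (\<exists>i \<in> set (out_edges P p \<epsilon> c). improves p \<epsilon> q c i) \<Longrightarrow>
         greedy_route P p \<epsilon> q c c (1 + length (out_edges P p \<epsilon> c))"
| move: "k = length (takeWhile (\<lambda>i. \<not> improves p \<epsilon> q c i) (out_edges P p \<epsilon> c)) \<Longrightarrow>
         k < length (out_edges P p \<epsilon> c) \<Longrightarrow>
         greedy_route P p \<epsilon> q (out_edges P p \<epsilon> c ! k) r t \<Longrightarrow>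
         greedy_route P p \<epsilon> q c r (1 + (k + 1) + t)"

end

theory Submission
  imports Defs
begin

lemma packing:
  fixes S :: "'a::euclidean_space set"
  assumes fin: "finite S" and sub: "S \<subseteq> cball c r" and s0: "s > 0" and r0: "r \<ge> 0"
    and sep: "\<And>x y. x\<in>S \<Longrightarrow> y\<in>S \<Longrightarrow> x\<noteq>y \<Longrightarrow> s \<le> dist x y"
  shows "real (card S) \<le> ((r + s/2) / (s/2)) ^ DIM('a)"
proof -
  let ?V = "unit_ball_vol (real DIM('a))"
  have V0: "?V > 0" by simp
  have disj: "disjoint_family_on (\<lambda>x. ball x (s/2)) S"
    unfolding disjoint_family_on_def
  proof (intro ballI impI)
    fix x y assume xy: "x \<in> S" "y \<in> S" "x \<noteq> y"
    show "ball x (s/2) \<inter> ball y (s/2) = {}"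
    proof (rule ccontr)
      assume "ball x (s/2) \<inter> ball y (s/2) \<noteq> {}"
      then obtain z where "dist x z < s/2" "dist y z < s/2" by auto
      then have "dist x y < s" using dist_triangle[of x y z] dist_commute[of z y] by linarith
      with sep[OF xy] show False by simp
    qed
  qed
  have U: "measure lborel (\<Union>x\<in>S. ball x (s/2)) = (\<Sum>x\<in>S. measure lborel (ball x (s/2)))"
    by (rule measure_finite_Union[OF fin]) (use s0 in \<open>auto simp: disj emeasure_ball\<close>)
  also have "\<dots> = real (card S) * (?V * (s/2) ^ DIM('a))"
    using s0 by (simp add: content_ball)
  finally have U2: "measure lborel (\<Union>x\<in>S. ball x (s/2)) = real (card S) * (?V * (s/2) ^ DIM('a))" .
  have "(\<Union>x\<in>S. ball x (s/2)) \<subseteq> ball c (r + s/2)"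
  proof
    fix z assume "z \<in> (\<Union>x\<in>S. ball x (s/2))"
    then obtain x where "x \<in> S" "dist x z < s/2" by auto
    moreover have "dist c x \<le> r" using sub \<open>x \<in> S\<close> by auto
    ultimately show "z \<in> ball c (r + s/2)" using dist_triangle[of c z x] by simp
  qed
  then have "measure lborel (\<Union>x\<in>S. ball x (s/2)) \<le> measure lborel (ball c (r + s/2))"
    by (intro measure_mono_fmeasurable) (use s0 r0 fin in \<open>auto simp: fmeasurable_def emeasure_ball intro!: sets.finite_UN\<close>)
  also have "\<dots> = ?V * (r + s/2) ^ DIM('a)" using s0 r0 by (simp add: content_ball)
  finally have "real (card S) * (?V * (s/2) ^ DIM('a)) \<le> ?V * (r + s/2) ^ DIM('a)" using U2 by simp
  then have "real (card S) * (s/2) ^ DIM('a) \<le> (r + s/2) ^ DIM('a)" using V0 by (simp add: mult.left_commute)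
  then have "real (card S) \<le> (r + s/2) ^ DIM('a) / (s/2) ^ DIM('a)"
    using s0 by (simp add: pos_le_divide_eq)
  then show ?thesis by (simp only: power_divide)
qed

lemma first_improving:
  fixes xs :: "nat list"
  assumes "sorted_wrt (<) xs" "k = length (takeWhile (\<lambda>i. \<not> Q i) xs)" "k < length xs"
  shows "Q (xs!k)" "xs!k \<in> set xs" "\<And>m. m \<in> set xs \<Longrightarrow> m < xs!k \<Longrightarrow> \<not> Q m"
proof -
  show "Q (xs!k)" using assms(2,3) nth_length_takeWhile[of "\<lambda>i. \<not> Q i" xs] by simp
  show "xs!k \<in> set xs" using assms by simp
  fix m assume m: "m \<in> set xs" "m < xs!k"
  then obtain j where j: "j < length xs" "xs!j = m" by (auto simp: in_set_conv_nth)
  have "j < k"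
  proof (rule ccontr)
    assume "\<not> j < k"
    then have "k \<le> j" by simp
    show False
    proof (cases "k = j")
      case True then show False using m j by simp
    next
      case False
      then have "k < j" using \<open>k \<le> j\<close> by simp
      then have "xs!k < xs!j" using assms(1) j(1) sorted_wrt_nth_less by blast
      with m j show False by simp
    qed
  qed
  then have jt: "j < length (takeWhile (\<lambda>i. \<not> Q i) xs)" using assms(2) by simp
  then have "takeWhile (\<lambda>i. \<not> Q i) xs ! j \<in> set (takeWhile (\<lambda>i. \<not> Q i) xs)" by (rule nth_mem)
  then have "\<not> Q (takeWhile (\<lambda>i. \<not> Q i) xs ! j)" by (auto dest: set_takeWhileD)
  then show "\<not> Q m" using takeWhile_nth[OF jt] j by simp
qed

lemma attain_finite:
  fixes A :: "'a::metric_space set"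
  assumes "finite A" "A \<noteq> {}"
  shows "\<exists>y\<in>A. infdist x A = dist x y"
proof -
  have "infdist x A = Inf (dist x ` A)" using assms by (simp add: infdist_def)
  also have "\<dots> = Min (dist x ` A)" using assms by (simp add: cInf_eq_Min)
  moreover have "Min (dist x ` A) \<in> dist x ` A" using assms by (intro Min_in) auto
  ultimately show ?thesis by auto
qed

locale GP =
  fixes P :: "'a::euclidean_space set" and p :: "nat \<Rightarrow> 'a" and \<epsilon> :: real
  assumes finP: "finite P" and n2: "2 \<le> card P" and e0: "0 < \<epsilon>" and e1: "\<epsilon> < 1/2"
    and gp: "greedy_perm P p"
begin

abbreviation "n \<equiv> card P"
abbreviation "R \<equiv> greedy_radius P p"

lemma bij: "bij_betw p {1..n} P" using gp by (simp add: greedy_perm_def)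
lemma inj: "inj_on p {1..n}" using bij by (rule bij_betw_imp_inj_on)
lemma img: "p ` {1..n} = P" using bij by (rule bij_betw_imp_surj_on)
lemma pin: "1 \<le> i \<Longrightarrow> i \<le> n \<Longrightarrow> p i \<in> P"
proof -
  assume "1 \<le> i" "i \<le> n"
  then have "p i \<in> p ` {1..n}" by (intro imageI) simp
  then show "p i \<in> P" using img by simp
qed

lemma greedy: "2 \<le> i \<Longrightarrow> i \<le> n \<Longrightarrow> x \<in> P \<Longrightarrow> x \<notin> p ` {1..<i} \<Longrightarrow>
   infdist x (p`{1..<i}) \<le> infdist (p i) (p`{1..<i})"
proof -
  assume a: "2 \<le> i" "i \<le> n" "x \<in> P" "x \<notin> p ` {1..<i}"
  have "\<forall>i \<in> {2..n}. \<forall>x \<in> P - p ` {1..<i}. infdist x (p ` {1..<i}) \<le> infdist (p i) (p ` {1..<i})"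
    using gp unfolding greedy_perm_def by (elim conjE)
  moreover have "i \<in> {2..n}" "x \<in> P - p ` {1..<i}" using a by auto
  ultimately show ?thesis by blast
qed

lemma mem_img: "1 \<le> a \<Longrightarrow> a \<le> n \<Longrightarrow> i \<le> n \<Longrightarrow> (p a \<in> p ` {1..<i}) \<longleftrightarrow> a < i"
proof
  assume "1 \<le> a" "a \<le> n" "i \<le> n" "p a \<in> p ` {1..<i}"
  then obtain j where "j \<in> {1..<i}" "p a = p j" by auto
  moreover have "a \<in> {1..n}" "j \<in> {1..n}" using \<open>1 \<le> a\<close> \<open>a \<le> n\<close> \<open>i \<le> n\<close> \<open>j \<in> {1..<i}\<close> by auto
  ultimately have "a = j" using inj_onD[OF inj] by blast
  then show "a < i" using \<open>j \<in> {1..<i}\<close> by simp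
qed auto

lemma pinj: "1 \<le> a \<Longrightarrow> a \<le> n \<Longrightarrow> 1 \<le> b \<Longrightarrow> b \<le> n \<Longrightarrow> a \<noteq> b \<Longrightarrow> p a \<noteq> p b"
proof
  assume "1 \<le> a" "a \<le> n" "1 \<le> b" "b \<le> n" "a \<noteq> b" "p a = p b"
  then show False using inj_onD[OF inj, of a b] by auto
qed

lemma R1: "R 1 = Max ((\<lambda>x. dist x (p 1)) ` P)" by (simp add: greedy_radius_def)
lemma Rge: "j \<ge> 2 \<Longrightarrow> R j = infdist (p (Suc j)) (p ` {1..<Suc j})"
  by (simp add: greedy_radius_def atLeastLessThanSuc_atLeastAtMost)

lemma cover:
  assumes "2 \<le> m" "m \<le> n" "x \<in> P"
  shows "infdist x (p`{1..<m}) \<le> R (m-1)"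
proof (cases "m = 2")
  case True
  have e: "{1..<(2::nat)} = {1}" by auto
  then have "p`{1..<m} = {p 1}" using True by simp
  then have "infdist x (p`{1..<m}) = dist x (p 1)" by simp
  also have "\<dots> \<le> R 1" unfolding R1 using finP assms(3) by (intro Max_ge) auto
  finally show ?thesis using True by simp
next
  case False
  then have m3: "m - 1 \<ge> 2" using assms by simp
  have "R (m-1) = infdist (p m) (p`{1..<m})" using Rge[OF m3] assms by simp
  moreover have "infdist x (p`{1..<m}) \<le> infdist (p m) (p`{1..<m})"
  proof (cases "x \<in> p ` {1..<m}")
    case True then show ?thesis by (simp add: infdist_nonneg)
  next
    case False then show ?thesis using greedy assms by simp
  qed
  ultimately show ?thesis by simp
qed

lemma sep:
  assumes "1 \<le> i" "i < j" "j \<le> n"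
  shows "R (j-1) \<le> dist (p i) (p j)"
proof (cases "j = 2")
  case True
  then have i1: "i = 1" using assms by simp
  have "R 1 \<le> dist (p 2) (p 1)" unfolding R1
  proof (rule Max.boundedI)
    show "finite ((\<lambda>x. dist x (p 1)) ` P)" using finP by simp
    show "(\<lambda>x. dist x (p 1)) ` P \<noteq> {}" using n2 by auto
    fix d assume "d \<in> (\<lambda>x. dist x (p 1)) ` P"
    then obtain x where x: "x \<in> P" "d = dist x (p 1)" by auto
    show "d \<le> dist (p 2) (p 1)"
    proof (cases "x = p 1")
      case True then show ?thesis using x by simp
    next
      case False
      have e: "{1..<(2::nat)} = {1}" by auto
      then have "p ` {1..<2} = {p 1}" by simp
      then show ?thesis using greedy[of 2 x] x False n2 by simp
    qed
  qed
  then show ?thesis using True i1 by (simp add: dist_commute)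
next
  case False
  then have m3: "j - 1 \<ge> 2" using assms by simp
  have "R (j-1) = infdist (p j) (p`{1..<j})" using Rge[OF m3] assms by simp
  also have "\<dots> \<le> dist (p j) (p i)" using assms by (intro infdist_le) auto
  finally show ?thesis by (simp add: dist_commute)
qed

end

context GP begin

definition "DS = {dist x y | x y. x \<in> P \<and> y \<in> P \<and> x \<noteq> y}"
definition "\<delta> = Min DS"
definition "diam = Max DS"

lemma spread_eq: "spread P = diam / \<delta>"
  by (simp add: spread_def DS_def \<delta>_def diam_def)

lemma DS_fin: "finite DS"
proof -
  have "DS \<subseteq> (\<lambda>(x,y). dist x y) ` (P \<times> P)" unfolding DS_def by auto
  moreover have "finite ((\<lambda>(x,y). dist x y) ` (P \<times> P))" using finP by simp
  ultimately show ?thesis by (rule finite_subset)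
qed

lemma p12: "p 1 \<in> P" "p 2 \<in> P" "p 1 \<noteq> p 2"
  using pin[of 1] pin[of 2] pinj[of 1 2] n2 by auto

lemma DS_ne: "DS \<noteq> {}"
proof -
  have "dist (p 1) (p 2) \<in> DS" unfolding DS_def using p12 by blast
  then show ?thesis by auto
qed

lemma delta_le: "x \<in> P \<Longrightarrow> y \<in> P \<Longrightarrow> x \<noteq> y \<Longrightarrow> \<delta> \<le> dist x y"
proof -
  assume "x \<in> P" "y \<in> P" "x \<noteq> y"
  then have "dist x y \<in> DS" unfolding DS_def by blast
  then show ?thesis unfolding \<delta>_def using DS_fin by (rule Min_le[rotated])
qed

lemma delta_pos: "\<delta> > 0"
proof -
  have "\<delta> \<in> DS" unfolding \<delta>_def using DS_fin DS_ne by (rule Min_in)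
  then obtain x y :: 'a where "\<delta> = dist x y" "x \<noteq> y" unfolding DS_def by blast
  then show ?thesis by simp
qed

lemma le_diam_DS: "x \<in> P \<Longrightarrow> y \<in> P \<Longrightarrow> x \<noteq> y \<Longrightarrow> dist x y \<le> diam"
proof -
  assume "x \<in> P" "y \<in> P" "x \<noteq> y"
  then have "dist x y \<in> DS" unfolding DS_def by blast
  then show ?thesis unfolding diam_def using DS_fin by (rule Max_ge[rotated])
qed

lemma delta_le_diam: "\<delta> \<le> diam"
  using delta_le[OF p12] le_diam_DS[OF p12] by simp

lemma le_diam: "x \<in> P \<Longrightarrow> y \<in> P \<Longrightarrow> dist x y \<le> diam"
  using le_diam_DS[of x y] delta_le_diam delta_pos by (cases "x = y") auto

lemma spread_ge1: "1 \<le> spread P"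
  using delta_le_diam delta_pos by (simp add: spread_eq)

lemma R_ge_delta:
  assumes "2 \<le> i" "i \<le> n"
  shows "\<delta> \<le> R (i-1)"
proof (cases "i = 2")
  case True
  have "dist (p 2) (p 1) \<le> R 1" unfolding R1 using finP p12 by (intro Max_ge) auto
  moreover have "\<delta> \<le> dist (p 2) (p 1)" using delta_le p12 by (simp add: dist_commute)
  ultimately show ?thesis using True by simp
next
  case False
  then have m3: "i - 1 \<ge> 2" using assms by simp
  have R: "R (i-1) = infdist (p i) (p`{1..<i})" using Rge[OF m3] assms by simp
  have "finite (p`{1..<i})" "p`{1..<i} \<noteq> {}" using assms by auto
  then obtain y where y: "y \<in> p`{1..<i}" "infdist (p i) (p`{1..<i}) = dist (p i) y"
    using attain_finite by blast
  then obtain j where j: "j \<in> {1..<i}" "y = p j" by auto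
  have "p i \<noteq> p j" using pinj[of i j] j assms by auto
  moreover have "p i \<in> P" "p j \<in> P" using pin j assms by auto
  ultimately have "\<delta> \<le> dist (p i) (p j)" using delta_le by blast
  then show ?thesis using R y j by simp
qed

lemma R_le_diam:
  assumes "2 \<le> i" "i \<le> n"
  shows "R (i-1) \<le> diam"
proof (cases "i = 2")
  case True
  have "R 1 \<in> (\<lambda>x. dist x (p 1)) ` P" unfolding R1 using finP p12 by (intro Max_in) auto
  then obtain x where "x \<in> P" "R 1 = dist x (p 1)" by auto
  then show ?thesis using True le_diam p12 by simp
next
  case False
  then have m3: "i - 1 \<ge> 2" using assms by simp
  have "R (i-1) = infdist (p i) (p`{1..<i})" using Rge[OF m3] assms by simp
  also have "\<dots> \<le> dist (p i) (p 1)" using assms by (intro infdist_le) auto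
  also have "\<dots> \<le> diam" using le_diam pin assms by simp
  finally show ?thesis .
qed

lemma friend_iff:
  assumes "1 \<le> a" "a \<le> n" "i \<le> n"
  shows "p a \<in> friend_list P p \<epsilon> i \<longleftrightarrow> (i \<noteq> 1 \<and> a < i \<and> dist (p a) (p i) \<le> 8 * R (i - 1) / \<epsilon>)"
  using mem_img[OF assms] by (simp add: friend_list_def)

lemma out_iff:
  assumes "1 \<le> a" "a \<le> n"
  shows "i \<in> set (out_edges P p \<epsilon> a) \<longleftrightarrow>
     (1 \<le> i \<and> i \<le> n \<and> i \<noteq> 1 \<and> a < i \<and> dist (p a) (p i) \<le> 8 * R (i - 1) / \<epsilon>)"
proof -
  have "i \<in> set (out_edges P p \<epsilon> a) \<longleftrightarrow> (1 \<le> i \<and> i \<le> n \<and> p a \<in> friend_list P p \<epsilon> i)"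
    by (auto simp: out_edges_def)
  then show ?thesis using friend_iff[OF assms] by blast
qed

lemma out_sorted: "sorted_wrt (<) (out_edges P p \<epsilon> a)"
  unfolding out_edges_def by (rule sorted_wrt_filter, rule sorted_wrt_upt)

lemma out_len: "length (out_edges P p \<epsilon> a) = card (set (out_edges P p \<epsilon> a))"
  unfolding out_edges_def by (intro distinct_card[symmetric]) simp

end

lemma key0:
  fixes e r D lam tc :: real
  assumes e0: "0 < e" and e1: "e < 1/2" and lam: "lam = 1 - e/4" and tc: "tc = e * (2 - e/4) / 8"
  and r0: "0 \<le> r" and big: "(1+e) * r < D"
  shows "r + tc * D < lam * D"
proof -
  have "0 \<le> (1+e) * r" using r0 e0 by simp
  then have D0: "0 < D" using big by linarith
  have e2: "e * e \<le> e / 2" using e0 e1 mult_left_mono[of e "1/2" e] by simp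
  have e3: "0 \<le> e * e * e" using e0 by simp
  have id: "(1+e) * (lam - tc) = 1 + e/2 - 15/32 * (e*e) + (e*e*e)/32"
    unfolding lam tc by (simp add: field_simps)
  have h: "1 \<le> (1+e) * (lam - tc)" unfolding id using e2 e3 e0 by linarith
  have "(1+e) * r < D * 1" using big by simp
  also have "D * 1 \<le> D * ((1+e) * (lam - tc))" using h D0 by (intro mult_left_mono) auto
  finally have "r * (1+e) < (D * (lam - tc)) * (1+e)" by (simp add: algebra_simps)
  then have "r < D * (lam - tc)" using e0 by (simp add: mult_less_cancel_right_pos)
  then show ?thesis by (simp add: algebra_simps)
qed

context GP begin

definition "lam = 1 - \<epsilon>/4"
definition "tc = \<epsilon> * (2 - \<epsilon>/4) / 8"
definition "rho q = Min ((\<lambda>p'. dist q p') ` P)"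
definition "Inv q c \<longleftrightarrow> (\<forall>i. 1 \<le> i \<longrightarrow> i < c \<longrightarrow> rho q + tc * dist q (p c) \<le> dist q (p i))"

lemma tc_pos: "0 < tc" using e0 e1 by (simp add: tc_def)
lemma lam_le1: "lam \<le> 1" "0 < lam" using e0 e1 by (auto simp: lam_def)
lemma tc_lam: "tc = \<epsilon> * (1 + lam) / 8" by (simp add: tc_def lam_def)

lemma imp_iff: "improves p \<epsilon> q c i \<longleftrightarrow> dist q (p i) \<le> lam * dist q (p c)"
  by (simp add: improves_def lam_def)

lemma rho_le: "x \<in> P \<Longrightarrow> rho q \<le> dist q x"
  unfolding rho_def using finP by (intro Min_le) auto

lemma rho_ex: "\<exists>N\<in>P. dist q N = rho q"
proof -
  have "rho q \<in> (\<lambda>p'. dist q p') ` P" unfolding rho_def using finP p12 by (intro Min_in) auto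
  then show ?thesis by auto
qed

lemma rho_nonneg: "0 \<le> rho q"
proof -
  obtain N where "N \<in> P" "dist q N = rho q" using rho_ex[of q] by blast
  moreover have "0 \<le> dist q N" by (rule zero_le_dist)
  ultimately show ?thesis by simp
qed

lemma key:
  assumes r0: "0 \<le> r" and big: "(1+\<epsilon>) * r < D"
  shows "r + tc * D < lam * D"
  using key0[OF e0 e1 lam_def tc_def r0 big] .

end

context GP begin

lemma move_inv:
  assumes a: "1 \<le> a" "a \<le> n" and inv: "Inv q a"
    and b: "b \<in> set (out_edges P p \<epsilon> a)" "improves p \<epsilon> q a b"
    and first: "\<And>m. m \<in> set (out_edges P p \<epsilon> a) \<Longrightarrow> m < b \<Longrightarrow> \<not> improves p \<epsilon> q a m"
    and big: "(1+\<epsilon>) * rho q < dist q (p b)"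
  shows "Inv q b"
proof -
  define Da where "Da = dist q (p a)"
  define Db where "Db = dist q (p b)"
  define \<rho> where "\<rho> = rho q"
  have bo: "1 \<le> b" "b \<le> n" "a < b" using out_iff[OF a] b(1) by auto
  have Dba: "Db \<le> lam * Da" using b(2) by (simp add: imp_iff Da_def Db_def)
  have Da0: "0 \<le> Da" by (simp add: Da_def)
  have Dba': "Db \<le> Da" using Dba lam_le1 Da0 by (smt (verit) mult_left_le_one_le)
  have r0: "0 \<le> \<rho>" using rho_nonneg by (simp add: \<rho>_def)
  have bigB: "(1+\<epsilon>) * \<rho> < Db" using big by (simp add: \<rho>_def Db_def)
  have bigA: "(1+\<epsilon>) * \<rho> < Da" using bigB Dba' by linarith
  have kA: "\<rho> + tc * Da < lam * Da" using key[OF r0 bigA] .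
  have Dapos: "0 < Da" using bigA r0 e0 by (smt (verit) mult_nonneg_nonneg)
  have tcb: "tc * Db \<le> tc * Da" using Dba' tc_pos by (simp add: mult_left_mono)
  have lamDa: "lam * Da < Da" using Dapos lam_le1 e0 by (simp add: lam_def)
  show ?thesis unfolding Inv_def
  proof (intro allI impI)
    fix i assume i: "1 \<le> i" "i < b"
    show "rho q + tc * dist q (p b) \<le> dist q (p i)"
    proof (rule ccontr)
      assume "\<not> ?thesis"
      then have di: "dist q (p i) < \<rho> + tc * Db" by (simp add: \<rho>_def Db_def)
      consider "i < a" | "i = a" | "a < i" by linarith
      then show False
      proof cases
        case 1
        then have "\<rho> + tc * Da \<le> dist q (p i)" using inv i unfolding Inv_def \<rho>_def Da_def by blast
        then show False using di tcb by linarith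
      next
        case 2
        then show False using di tcb kA lamDa by (simp add: Da_def)
      next
        case 3
        define Q where "Q = (\<lambda>m. a < m \<and> m < b \<and> dist q (p m) \<le> lam * Da)"
        have Qi: "Q i" unfolding Q_def using 3 i di tcb kA by linarith
        define m where "m = (LEAST m. Q m)"
        have Qm: "Q m" unfolding m_def using Qi by (rule LeastI)
        have mi: "m \<le> i" unfolding m_def using Qi by (rule Least_le)
        have below: "\<And>j. j < m \<Longrightarrow> \<not> Q j" unfolding m_def by (rule not_less_Least)
        have m1: "a < m" "m < b" "dist q (p m) \<le> lam * Da" using Qm by (auto simp: Q_def)
        have mn: "m \<le> n" "1 \<le> m" "m \<noteq> 1" "2 \<le> m" using m1 bo a by auto
        have "m \<notin> set (out_edges P p \<epsilon> a)"
        proof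
          assume "m \<in> set (out_edges P p \<epsilon> a)"
          then have "\<not> improves p \<epsilon> q a m" using first m1 by blast
          then show False using m1 by (simp add: imp_iff Da_def)
        qed
        then have far: "\<not> dist (p a) (p m) \<le> 8 * R (m - 1) / \<epsilon>"
          using out_iff[OF a, of m] mn m1 by blast
        have dam: "dist (p a) (p m) \<le> Da + lam * Da"
          using dist_triangle[of "p a" "p m" q] m1 by (simp add: Da_def dist_commute)
        have "8 * R (m - 1) / \<epsilon> < Da + lam * Da" using far dam by linarith
        then have "8 * R (m - 1) < (Da + lam * Da) * \<epsilon>" using e0 by (simp add: divide_less_eq)
        then have Rm: "R (m - 1) < tc * Da" unfolding tc_lam by (simp add: algebra_simps)
        obtain N where N: "N \<in> P" "dist q N = \<rho>" using rho_ex[of q] by (auto simp: \<rho>_def)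
        have cov: "infdist N (p`{1..<m}) \<le> R (m-1)" using cover[OF mn(4) mn(1) N(1)] .
        have "finite (p`{1..<m})" "p`{1..<m} \<noteq> {}" using mn by auto
        then obtain y where y: "y \<in> p`{1..<m}" "infdist N (p`{1..<m}) = dist N y"
          using attain_finite by blast
        then obtain j where j: "1 \<le> j" "j < m" "y = p j" by auto
        have dNj: "dist N (p j) \<le> R (m-1)" using y j cov by simp
        have dj: "dist q (p j) < \<rho> + tc * Da"
          using dist_triangle[of q "p j" N] N dNj Rm by linarith
        consider "j < a" | "j = a" | "a < j" by linarith
        then show False
        proof cases
          case 1
          then have "\<rho> + tc * Da \<le> dist q (p j)" using inv j unfolding Inv_def \<rho>_def Da_def by blast
          then show False using dj by linarith
        next
          case 2
          then show False using dj kA lamDa by (simp add: Da_def)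
        next
          case 3
          then have "\<not> Q j" using below j by blast
          then have "\<not> dist q (p j) \<le> lam * Da" using 3 j m1 by (simp add: Q_def)
          then show False using dj kA by linarith
        qed
      qed
    qed
  qed
qed

end

lemma tw_less: "x \<in> set xs \<Longrightarrow> \<not> P x \<Longrightarrow> length (takeWhile P xs) < length xs"
  by (induction xs) auto

context GP begin

lemma stop_false:
  assumes c: "1 \<le> c" "c \<le> n" and inv: "Inv q c"
    and stop: "\<not> (\<exists>i \<in> set (out_edges P p \<epsilon> c). improves p \<epsilon> q c i)"
    and big: "(1+\<epsilon>) * rho q < dist q (p c)"
  shows False
proof -
  define Dc where "Dc = dist q (p c)"
  define \<rho> where "\<rho> = rho q"
  have r0: "0 \<le> \<rho>" using rho_nonneg by (simp add: \<rho>_def)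
  have bigC: "(1+\<epsilon>) * \<rho> < Dc" using big by (simp add: \<rho>_def Dc_def)
  have kC: "\<rho> + tc * Dc < lam * Dc" using key[OF r0 bigC] .
  have Dcpos: "0 < Dc" using bigC r0 e0 by (smt (verit) mult_nonneg_nonneg)
  have lamDc: "lam * Dc < Dc" using Dcpos lam_le1 e0 by (simp add: lam_def)
  have tcD: "0 < tc * Dc" using tc_pos Dcpos by simp
  obtain N where N: "N \<in> P" "dist q N = \<rho>" using rho_ex[of q] by (auto simp: \<rho>_def)
  obtain k0 where k0: "k0 \<in> {1..n}" "p k0 = N" using N(1) img by (metis imageE)
  define Q where "Q = (\<lambda>g. 1 \<le> g \<and> g \<le> n \<and> dist q (p g) < \<rho> + tc * Dc)"
  have Qk0: "Q k0" unfolding Q_def using k0 N tcD by auto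
  define g where "g = (LEAST g. Q g)"
  have Qg: "Q g" unfolding g_def using Qk0 by (rule LeastI)
  have below: "\<And>j. j < g \<Longrightarrow> \<not> Q j" unfolding g_def by (rule not_less_Least)
  have g1: "1 \<le> g" "g \<le> n" "dist q (p g) < \<rho> + tc * Dc" using Qg by (auto simp: Q_def)
  have cg: "c < g"
  proof -
    have "\<not> g < c"
    proof
      assume "g < c"
      then have "\<rho> + tc * Dc \<le> dist q (p g)" using inv g1 unfolding Inv_def \<rho>_def Dc_def by blast
      then show False using g1 by linarith
    qed
    moreover have "g \<noteq> c"
    proof
      assume "g = c"
      then show False using g1 kC lamDc by (simp add: Dc_def)
    qed
    ultimately show ?thesis by linarith
  qed
  have g2: "2 \<le> g" using cg c by linarith
  have cov: "infdist N (p`{1..<g}) \<le> R (g-1)" using cover[OF g2 g1(2) N(1)] .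
  have "finite (p`{1..<g})" "p`{1..<g} \<noteq> {}" using g2 by auto
  then obtain y where y: "y \<in> p`{1..<g}" "infdist N (p`{1..<g}) = dist N y"
    using attain_finite by blast
  then obtain j where j: "1 \<le> j" "j < g" "y = p j" by auto
  have "\<not> Q j" using below j by blast
  then have dj: "\<rho> + tc * Dc \<le> dist q (p j)" using j g1 by (auto simp: Q_def)
  have dNj: "dist N (p j) \<le> R (g-1)" using y j cov by simp
  have Rg: "tc * Dc \<le> R (g-1)"
    using dist_triangle[of q "p j" N] N dNj dj by linarith
  have dcg: "dist (p c) (p g) \<le> Dc + lam * Dc"
    using dist_triangle[of "p c" "p g" q] g1 kC by (simp add: Dc_def dist_commute)
  have "Dc + lam * Dc = 8 * (tc * Dc) / \<epsilon>" unfolding tc_lam using e0 by (simp add: field_simps)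
  also have "\<dots> \<le> 8 * R (g-1) / \<epsilon>" using Rg e0 by (simp add: divide_right_mono)
  finally have "dist (p c) (p g) \<le> 8 * R (g-1) / \<epsilon>" using dcg by linarith
  then have "g \<in> set (out_edges P p \<epsilon> c)" using out_iff[OF c, of g] g1 g2 cg by auto
  moreover have "improves p \<epsilon> q c g" unfolding imp_iff using g1 kC by (simp add: Dc_def)
  ultimately show False using stop by blast
qed

lemma route_basic:
  assumes "greedy_route P p \<epsilon> q c r t" "1 \<le> c" "c \<le> n"
  shows "1 \<le> r \<and> r \<le> n \<and> dist q (p r) \<le> dist q (p c)"
  using assms
proof (induction rule: greedy_route.induct)
  case (stop c)
  then show ?case by simp
next
  case (move k c r t)
  define b where "b = out_edges P p \<epsilon> c ! k"
  have bo: "b \<in> set (out_edges P p \<epsilon> c)" using move.hyps(2) by (simp add: b_def)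
  have b1: "1 \<le> b" "b \<le> n" using out_iff[OF move.prems] bo by auto
  have "improves p \<epsilon> q c b"
    using first_improving(1)[OF out_sorted move.hyps(1) move.hyps(2)] by (simp add: b_def)
  then have "dist q (p b) \<le> dist q (p c)" using lam_le1 unfolding imp_iff
    by (smt (verit) mult_left_le_one_le zero_le_dist)
  then show ?case using move.IH b1 by (simp add: b_def)
qed

lemma route_correct:
  assumes "greedy_route P p \<epsilon> q c r t" "1 \<le> c" "c \<le> n" "Inv q c"
  shows "\<not> (1+\<epsilon>) * rho q < dist q (p r)"
  using assms
proof (induction rule: greedy_route.induct)
  case (stop c)
  then show ?case using stop_false by blast
next
  case (move k c r t)
  define b where "b = out_edges P p \<epsilon> c ! k"
  have bo: "b \<in> set (out_edges P p \<epsilon> c)" using move.hyps(2) by (simp add: b_def)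
  have b1: "1 \<le> b" "b \<le> n" using out_iff[OF move.prems(1,2)] bo by auto
  have imp: "improves p \<epsilon> q c b"
    using first_improving(1)[OF out_sorted move.hyps(1) move.hyps(2)] by (simp add: b_def)
  have first: "\<And>m. m \<in> set (out_edges P p \<epsilon> c) \<Longrightarrow> m < b \<Longrightarrow> \<not> improves p \<epsilon> q c m"
    using first_improving(3)[OF out_sorted move.hyps(1) move.hyps(2)] by (simp add: b_def)
  show ?case
  proof
    assume big: "(1+\<epsilon>) * rho q < dist q (p r)"
    have "dist q (p r) \<le> dist q (p b)" using route_basic[OF move.hyps(3)[folded b_def] b1] by simp
    then have bigb: "(1+\<epsilon>) * rho q < dist q (p b)" using big by linarith
    have "Inv q b" using move_inv[OF move.prems(1,2,3) bo imp first bigb] .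
    then show False using move.IH b1 big by (simp add: b_def)
  qed
qed

lemma Inv1: "Inv q 1" unfolding Inv_def by simp

lemma route_exists:
  "1 \<le> c \<Longrightarrow> c \<le> n \<Longrightarrow> \<exists>r t. greedy_route P p \<epsilon> q c r t"
proof (induction "n - c" arbitrary: c rule: less_induct)
  case less
  show ?case
  proof (cases "\<exists>i \<in> set (out_edges P p \<epsilon> c). improves p \<epsilon> q c i")
    case False
    then show ?thesis using greedy_route.stop by blast
  next
    case True
    define k where "k = length (takeWhile (\<lambda>i. \<not> improves p \<epsilon> q c i) (out_edges P p \<epsilon> c))"
    obtain i where "i \<in> set (out_edges P p \<epsilon> c)" "improves p \<epsilon> q c i" using True by blast
    then have kl: "k < length (out_edges P p \<epsilon> c)" unfolding k_def
      by (intro tw_less[of i]) auto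
    define b where "b = out_edges P p \<epsilon> c ! k"
    have bo: "b \<in> set (out_edges P p \<epsilon> c)" using kl by (simp add: b_def)
    have b1: "1 \<le> b" "b \<le> n" "c < b" using out_iff[OF less.prems] bo by auto
    have "n - b < n - c" using b1 by linarith
    then obtain r t where "greedy_route P p \<epsilon> q b r t" using less.hyps b1 by blast
    then have "greedy_route P p \<epsilon> q c r (1 + (k + 1) + t)"
      using greedy_route.move[OF k_def kl] by (simp add: b_def)
    then show ?thesis by blast
  qed
qed

end

context GP begin

lemma route_time:
  assumes "greedy_route P p \<epsilon> q c r t" "1 \<le> c" "c \<le> n"
    and hD: "\<And>a. 1 \<le> a \<Longrightarrow> a \<le> n \<Longrightarrow> real (length (out_edges P p \<epsilon> a)) \<le> Dl"
  shows "\<exists>s::nat. real t \<le> (real s + 1) * (2 + Dl) \<and>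
     (0 < s \<longrightarrow> max (rho q) (\<delta>/2) \<le> lam^(s-1) * dist q (p c))"
  using assms(1,2,3)
proof (induction rule: greedy_route.induct)
  case (stop c)
  have "real (length (out_edges P p \<epsilon> c)) \<le> Dl" using hD stop.prems by blast
  then have "real (1 + length (out_edges P p \<epsilon> c)) \<le> (real (0::nat) + 1) * (2 + Dl)" by simp
  then show ?case by blast
next
  case (move k c r t)
  define b where "b = out_edges P p \<epsilon> c ! k"
  have bo: "b \<in> set (out_edges P p \<epsilon> c)" using move.hyps(2) by (simp add: b_def)
  have b1: "1 \<le> b" "b \<le> n" "c < b" using out_iff[OF move.prems(1,2)] bo by auto
  have imp: "improves p \<epsilon> q c b"
    using first_improving(1)[OF out_sorted move.hyps(1) move.hyps(2)] by (simp add: b_def)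
  then have Dbc: "dist q (p b) \<le> lam * dist q (p c)" by (simp add: imp_iff)
  have Dbc': "dist q (p b) \<le> dist q (p c)" using Dbc lam_le1
    by (smt (verit) mult_left_le_one_le zero_le_dist)
  obtain s where s: "real t \<le> (real s + 1) * (2 + Dl)"
     "0 < s \<longrightarrow> max (rho q) (\<delta>/2) \<le> lam^(s-1) * dist q (p b)"
    using move.IH b1 by (auto simp: b_def)
  have "real (length (out_edges P p \<epsilon> c)) \<le> Dl" using hD move.prems by blast
  then have kD: "real (k + 1) \<le> Dl" using move.hyps(2) by linarith
  have T: "real (1 + (k + 1) + t) \<le> (real (Suc s) + 1) * (2 + Dl)"
    using s(1) kD by (simp add: algebra_simps)
  have M: "max (rho q) (\<delta>/2) \<le> lam^(Suc s - 1) * dist q (p c)"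
  proof (cases "s = 0")
    case True
    have "rho q \<le> dist q (p c)" using rho_le pin move.prems by simp
    moreover have "\<delta> \<le> dist (p c) (p b)"
      using delta_le pin pinj b1 move.prems by (metis less_irrefl)
    moreover have "dist (p c) (p b) \<le> dist q (p c) + dist q (p b)"
      using dist_triangle[of "p c" "p b" q] by (simp add: dist_commute)
    ultimately show ?thesis using True Dbc' by simp
  next
    case False
    then have "max (rho q) (\<delta>/2) \<le> lam^(s-1) * dist q (p b)" using s(2) by simp
    also have "\<dots> \<le> lam^(s-1) * (lam * dist q (p c))"
      using Dbc lam_le1 by (simp add: mult_left_mono)
    also have "\<dots> = lam^(Suc s - 1) * dist q (p c)" using False
      by (metis Suc_diff_1 diff_Suc_1 mult.assoc not_gr_zero power_Suc2)
    finally show ?thesis .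
  qed
  show ?case using T M by blast
qed

definition "lv i = (LEAST l::nat. R (i-1) < \<delta> * 2^(Suc l))"
definition "LL = (LEAST l::nat. diam < \<delta> * 2^(Suc l))"

lemma ex_pow: "\<exists>l::nat. x < \<delta> * 2^(Suc l)"
proof -
  obtain m::nat where "x/\<delta> < 2^m" using real_arch_pow[of 2 "x/\<delta>"] by auto
  then have "x < \<delta> * 2^m" using delta_pos by (simp add: pos_divide_less_eq mult.commute)
  also have "\<dots> \<le> \<delta> * 2^(Suc m)" using delta_pos by simp
  finally show ?thesis by blast
qed

lemma lv_facts:
  assumes "2 \<le> i" "i \<le> n"
  shows "lv i \<le> LL" "\<delta> * 2^(lv i) \<le> R (i-1)" "R (i-1) < \<delta> * 2^(Suc (lv i))"
proof -
  have ex: "\<exists>l::nat. R (i-1) < \<delta> * 2^(Suc l)" by (rule ex_pow)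
  show "R (i-1) < \<delta> * 2^(Suc (lv i))" unfolding lv_def using ex by (rule LeastI_ex)
  have "diam < \<delta> * 2^(Suc LL)" unfolding LL_def using ex_pow by (rule LeastI_ex)
  then have "R (i-1) < \<delta> * 2^(Suc LL)" using R_le_diam[OF assms] by linarith
  then show "lv i \<le> LL" unfolding lv_def by (rule Least_le)
  show "\<delta> * 2^(lv i) \<le> R (i-1)"
  proof (cases "lv i")
    case 0
    then show ?thesis using R_ge_delta[OF assms] by simp
  next
    case (Suc l)
    then have "l < lv i" by simp
    then have "\<not> R (i-1) < \<delta> * 2^(Suc l)" unfolding lv_def by (rule not_less_Least)
    then show ?thesis using Suc by simp
  qed
qed

lemma LL_bound: "real LL \<le> 2 * ln (spread P)"
proof (cases LL)
  case 0
  then show ?thesis using spread_ge1 by simp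
next
  case (Suc l)
  then have "l < LL" by simp
  then have "\<not> diam < \<delta> * 2^(Suc l)" unfolding LL_def by (rule not_less_Least)
  then have "\<delta> * 2^LL \<le> diam" using Suc by simp
  then have "2^LL \<le> spread P" using delta_pos by (simp add: spread_eq pos_le_divide_eq mult.commute)
  then have "ln (2^LL) \<le> ln (spread P)" using spread_ge1 by (subst ln_le_cancel_iff) auto
  then have a: "real LL * ln 2 \<le> ln (spread P)" by (simp add: ln_realpow)
  have "ln (1/2::real) \<le> 1/2 - 1" by (rule ln_le_minus_one) simp
  then have l2: "1/2 \<le> ln (2::real)" by (simp add: ln_div)
  have "real LL * (1/2) \<le> real LL * ln 2" using l2 by (intro mult_left_mono) auto
  then show ?thesis using a by linarith
qed

end

context GP begin

lemma level_card:
  assumes a: "1 \<le> a" "a \<le> n"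
  shows "real (card {i \<in> set (out_edges P p \<epsilon> a). lv i = l}) \<le> (1 + 32/\<epsilon>)^DIM('a)"
proof -
  define S where "S = {i \<in> set (out_edges P p \<epsilon> a). lv i = l}"
  define s where "s = \<delta> * 2^l"
  define r where "r = 16 * s / \<epsilon>"
  have s0: "0 < s" unfolding s_def using delta_pos by simp
  have r0: "0 \<le> r" unfolding r_def using s0 e0 by simp
  have Sprop: "\<And>i. i \<in> S \<Longrightarrow> 2 \<le> i \<and> i \<le> n \<and> a < i \<and> dist (p a) (p i) \<le> 8 * R (i-1) / \<epsilon> \<and> lv i = l"
    unfolding S_def using out_iff[OF a] by auto
  have Ssub: "S \<subseteq> {1..n}" using Sprop by fastforce
  have finS: "finite S" using Ssub finite_subset by blast
  have injS: "inj_on p S" using inj_on_subset[OF inj Ssub] .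
  have cardS: "card S = card (p ` S)" using card_image[OF injS] by simp
  have sub: "p ` S \<subseteq> cball (p a) r"
  proof
    fix x assume "x \<in> p ` S"
    then obtain i where i: "i \<in> S" "x = p i" by blast
    have h: "2 \<le> i" "i \<le> n" "dist (p a) (p i) \<le> 8 * R (i-1) / \<epsilon>" "lv i = l" using Sprop[OF i(1)] by auto
    have "R (i-1) < \<delta> * 2^(Suc l)" using lv_facts(3)[OF h(1,2)] h(4) by simp
    then have "R (i-1) < 2 * s" by (simp add: s_def)
    then have "8 * R (i-1) / \<epsilon> \<le> r" unfolding r_def using e0 by (simp add: divide_right_mono)
    then show "x \<in> cball (p a) r" using h(3) i(2) by simp
  qed
  have sep: "\<And>x y. x \<in> p ` S \<Longrightarrow> y \<in> p ` S \<Longrightarrow> x \<noteq> y \<Longrightarrow> s \<le> dist x y"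
  proof -
    have one: "s \<le> dist (p i) (p j)" if ij: "i \<in> S" "j \<in> S" "i < j" for i j
    proof -
      have hi: "2 \<le> i" using Sprop[OF ij(1)] by simp
      have hj: "2 \<le> j" "j \<le> n" "lv j = l" using Sprop[OF ij(2)] by auto
      have "s \<le> R (j-1)" using lv_facts(2)[OF hj(1,2)] hj(3) by (simp add: s_def)
      also have "\<dots> \<le> dist (p i) (p j)" using sep[of i j] hi ij(3) hj(2) by simp
      finally show ?thesis .
    qed
    fix x y assume xy: "x \<in> p ` S" "y \<in> p ` S" "x \<noteq> y"
    then obtain i j where ij: "i \<in> S" "j \<in> S" "x = p i" "y = p j" by blast
    then have "i \<noteq> j" using xy(3) by blast
    then consider "i < j" | "j < i" by linarith
    then show "s \<le> dist x y"
    proof cases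
      case 1 then show ?thesis using one[OF ij(1,2)] ij by simp
    next
      case 2 then show ?thesis using one[OF ij(2,1)] ij by (simp add: dist_commute)
    qed
  qed
  have "real (card (p ` S)) \<le> ((r + s/2) / (s/2)) ^ DIM('a)"
    using packing[OF _ sub s0 r0 sep] finS by simp
  also have "(r + s/2) / (s/2) = 1 + 32/\<epsilon>" unfolding r_def using s0 e0 by (simp add: field_simps)
  finally show ?thesis using cardS by (simp add: S_def)
qed

lemma deg_bound:
  assumes a: "1 \<le> a" "a \<le> n"
  shows "real (length (out_edges P p \<epsilon> a)) \<le> (1 + 32/\<epsilon>)^DIM('a) * (real LL + 1)"
proof -
  define Ou where "Ou = set (out_edges P p \<epsilon> a)"
  define S where "S = (\<lambda>l. {i \<in> Ou. lv i = l})"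
  have "Ou \<subseteq> (\<Union>l\<in>{0..LL}. S l)"
  proof
    fix i assume i: "i \<in> Ou"
    then have "2 \<le> i" "i \<le> n" using out_iff[OF a] unfolding Ou_def by auto
    then have "lv i \<le> LL" by (rule lv_facts(1))
    then show "i \<in> (\<Union>l\<in>{0..LL}. S l)" using i unfolding S_def by auto
  qed
  then have "card Ou \<le> card (\<Union>l\<in>{0..LL}. S l)"
    by (intro card_mono) (auto simp: S_def Ou_def)
  also have "\<dots> \<le> (\<Sum>l\<in>{0..LL}. card (S l))" by (rule card_UN_le) simp
  finally have c1: "real (card Ou) \<le> (\<Sum>l\<in>{0..LL}. real (card (S l)))" by (simp flip: of_nat_sum)
  also have "\<dots> \<le> (\<Sum>l\<in>{0..LL}. (1 + 32/\<epsilon>)^DIM('a))"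
    by (intro sum_mono) (simp add: S_def Ou_def level_card[OF a])
  also have "\<dots> = (1 + 32/\<epsilon>)^DIM('a) * (real LL + 1)" by simp
  finally show ?thesis using out_len by (simp add: Ou_def)
qed

end

context GP begin

lemma steps_bound:
  assumes s: "0 < s \<longrightarrow> max (rho q) (\<delta>/2) \<le> lam^(s-1) * dist q (p 1)"
  shows "real s + 1 \<le> 10 * (1 + ln (spread P)) / \<epsilon>"
proof -
  define \<Phi> where "\<Phi> = spread P"
  have P1: "1 \<le> \<Phi>" using spread_ge1 by (simp add: \<Phi>_def)
  have lP: "0 \<le> ln \<Phi>" using P1 by simp
  have ee: "1 \<le> 1/\<epsilon>" using e0 e1 by (simp add: field_simps)
  show ?thesis
  proof (cases "s = 0")
    case True
    have "1 \<le> 10 * (1 + ln \<Phi>)" using lP by simp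
    also have "\<dots> \<le> 10 * (1 + ln \<Phi>) / \<epsilon>" using mult_left_mono[OF ee, of "10 * (1 + ln \<Phi>)"] lP by simp
    finally show ?thesis using True by (simp add: \<Phi>_def)
  next
    case False
    define M where "M = max (rho q) (\<delta>/2)"
    have M0: "0 < M" unfolding M_def using delta_pos by simp
    have Ms: "M \<le> lam^(s-1) * dist q (p 1)" using s False by (simp add: M_def)
    obtain N where N: "N \<in> P" "dist q N = rho q" using rho_ex[of q] by blast
    have "dist q (p 1) \<le> dist q N + dist N (p 1)" by (rule dist_triangle)
    also have "dist N (p 1) \<le> diam" using le_diam N p12 by simp
    finally have D1: "dist q (p 1) \<le> rho q + diam" using N by simp
    have diamM: "diam \<le> 2 * \<Phi> * M"
    proof -
      have "diam = \<Phi> * \<delta>" using delta_pos by (simp add: \<Phi>_def spread_eq)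
      also have "\<dots> \<le> \<Phi> * (2 * M)" using P1 by (intro mult_left_mono) (auto simp: M_def)
      finally show ?thesis by simp
    qed
    have "dist q (p 1) \<le> M * (1 + 2 * \<Phi>)" using D1 diamM by (simp add: M_def algebra_simps)
    then have "lam^(s-1) * dist q (p 1) \<le> lam^(s-1) * (M * (1 + 2 * \<Phi>))"
      using lam_le1 by (intro mult_left_mono) auto
    then have "M \<le> lam^(s-1) * (M * (1 + 2 * \<Phi>))" using Ms by linarith
    then have "M * 1 \<le> M * (lam^(s-1) * (1 + 2 * \<Phi>))" by (simp add: algebra_simps)
    then have one: "1 \<le> lam^(s-1) * (1 + 2 * \<Phi>)" using M0 by (simp add: mult_le_cancel_left_pos)
    have lampos: "0 < lam" using lam_le1 by simp
    have "0 \<le> ln (lam^(s-1) * (1 + 2 * \<Phi>))" using one by simp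
    also have "\<dots> = real (s-1) * ln lam + ln (1 + 2 * \<Phi>)"
      using lampos P1 by (simp add: ln_mult ln_realpow)
    finally have A: "0 \<le> real (s-1) * ln lam + ln (1 + 2 * \<Phi>)" .
    have "ln lam \<le> lam - 1" using lampos by (rule ln_le_minus_one)
    then have ll: "ln lam \<le> - (\<epsilon>/4)" by (simp add: lam_def)
    have "real (s-1) * ln lam \<le> real (s-1) * (- (\<epsilon>/4))" using ll by (intro mult_left_mono) auto
    then have B: "real (s-1) * (\<epsilon>/4) \<le> ln (1 + 2 * \<Phi>)" using A by simp
    have "ln (1 + 2 * \<Phi>) \<le> ln (3 * \<Phi>)" using P1 by simp
    also have "\<dots> = ln 3 + ln \<Phi>" using P1 by (simp add: ln_mult)
    also have "ln (3::real) \<le> 3 - 1" by (rule ln_le_minus_one) simp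
    then have "ln 3 + ln \<Phi> \<le> 2 + ln \<Phi>" by simp
    finally have C: "real (s-1) * (\<epsilon>/4) \<le> 2 + ln \<Phi>" using B by linarith
    have rs: "real (s-1) = real s - 1" using False by simp
    have "(real s - 1) * \<epsilon> \<le> 8 + 4 * ln \<Phi>" using C rs by (simp add: algebra_simps)
    then have "real s - 1 \<le> (8 + 4 * ln \<Phi>) / \<epsilon>" using e0 by (simp add: pos_le_divide_eq)
    moreover have "2 \<le> 2 / \<epsilon>" using ee by simp
    ultimately have "real s + 1 \<le> (8 + 4 * ln \<Phi>) / \<epsilon> + 2 / \<epsilon>" by linarith
    also have "\<dots> = (10 + 4 * ln \<Phi>) / \<epsilon>" by (simp add: add_divide_distrib)
    also have "\<dots> \<le> 10 * (1 + ln \<Phi>) / \<epsilon>" using lP e0 by (simp add: divide_right_mono)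
    finally show ?thesis by (simp add: \<Phi>_def)
  qed
qed

lemma final_time:
  assumes "greedy_route P p \<epsilon> q 1 r t"
  shows "real t \<le> (40 * 33^DIM('a)) * (1/\<epsilon>)^(DIM('a)+1) * (1 + ln (spread P))^2"
proof -
  define X where "X = (1 + 32/\<epsilon>)^DIM('a)"
  define Dl where "Dl = X * (real LL + 1)"
  define lP where "lP = ln (spread P)"
  have lP0: "0 \<le> lP" using spread_ge1 by (simp add: lP_def)
  have ee: "1 \<le> 1/\<epsilon>" using e0 e1 by (simp add: field_simps)
  have X1: "1 \<le> X" unfolding X_def using e0 by (intro one_le_power) simp
  have hD: "\<And>a. 1 \<le> a \<Longrightarrow> a \<le> n \<Longrightarrow> real (length (out_edges P p \<epsilon> a)) \<le> Dl"
    using deg_bound by (simp add: Dl_def X_def)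
  obtain s where s: "real t \<le> (real s + 1) * (2 + Dl)"
     "0 < s \<longrightarrow> max (rho q) (\<delta>/2) \<le> lam^(s-1) * dist q (p 1)"
    using route_time[OF assms _ _ hD] n2 by auto
  have S: "real s + 1 \<le> 10 * (1 + lP) / \<epsilon>" using steps_bound[OF s(2)] by (simp add: lP_def)
  have LL2: "real LL \<le> 2 * lP" using LL_bound by (simp add: lP_def)
  have "Dl \<le> X * (2 * lP + 1)" unfolding Dl_def using LL2 X1 by (intro mult_left_mono) auto
  moreover have "0 \<le> X * lP" using X1 lP0 by simp
  moreover have "X * (2 * lP + 1) = 2 * (X * lP) + X" "4 * X * (1 + lP) = 4 * X + 4 * (X * lP)"
    by (simp_all add: algebra_simps)
  ultimately have Dl2: "2 + Dl \<le> 4 * X * (1 + lP)" using X1 by linarith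
  have Dl0: "0 \<le> 2 + Dl" unfolding Dl_def using X1 by simp
  have A0: "0 \<le> 10 * (1 + lP) / \<epsilon>" using lP0 e0 by simp
  have "(real s + 1) * (2 + Dl) \<le> (10 * (1 + lP) / \<epsilon>) * (4 * X * (1 + lP))"
    using S Dl2 A0 Dl0 by (rule mult_mono)
  then have "real t \<le> (10 * (1 + lP) / \<epsilon>) * (4 * X * (1 + lP))" using s(1) by linarith
  also have "\<dots> = 40 * X * (1/\<epsilon>) * (1 + lP)^2" by (simp add: power2_eq_square field_simps)
  also have "X \<le> 33^DIM('a) * (1/\<epsilon>)^DIM('a)"
  proof -
    have "1 + 32/\<epsilon> \<le> 33 * (1/\<epsilon>)" using ee by simp
    then have "X \<le> (33 * (1/\<epsilon>))^DIM('a)" unfolding X_def using e0 by (intro power_mono) auto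
    also have "(33 * (1/\<epsilon>))^DIM('a) = 33^DIM('a) * (1/\<epsilon>)^DIM('a)" by (rule power_mult_distrib)
    finally show ?thesis .
  qed
  then have "40 * X * (1/\<epsilon>) * (1 + lP)^2 \<le> 40 * (33^DIM('a) * (1/\<epsilon>)^DIM('a)) * (1/\<epsilon>) * (1 + lP)^2"
    using e0 by (intro mult_right_mono) auto
  also have "\<dots> = (40 * 33^DIM('a)) * (1/\<epsilon>)^(DIM('a)+1) * (1 + lP)^2" by (simp add: algebra_simps)
  finally show ?thesis by (simp add: lP_def)
qed

end

theorem lemma4p3:
  "\<exists>C > 0. \<forall>(P :: 'a::euclidean_space set) p \<epsilon> q.
     finite P \<and> card P \<ge> 2 \<and> 0 < \<epsilon> \<and> \<epsilon> < 1/2 \<and> greedy_perm P p \<longrightarrow>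
       (\<exists>r t. greedy_route P p \<epsilon> q 1 r t) \<and>
       (\<forall>r t. greedy_route P p \<epsilon> q 1 r t \<longrightarrow>
          p r \<in> P \<and>
          dist q (p r) \<le> (1 + \<epsilon>) * Min ((\<lambda>p'. dist q p') ` P) \<and>
          real t \<le> C * (1 / \<epsilon>) ^ (DIM('a) + 1) * (1 + ln (spread P)) ^ 2)"
proof -
  have C0: "(0::real) < 40 * 33^DIM('a)" by simp
  have main: "\<forall>(P :: 'a::euclidean_space set) p \<epsilon> q.
     finite P \<and> card P \<ge> 2 \<and> 0 < \<epsilon> \<and> \<epsilon> < 1/2 \<and> greedy_perm P p \<longrightarrow>
       (\<exists>r t. greedy_route P p \<epsilon> q 1 r t) \<and>
       (\<forall>r t. greedy_route P p \<epsilon> q 1 r t \<longrightarrow>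
          p r \<in> P \<and>
          dist q (p r) \<le> (1 + \<epsilon>) * Min ((\<lambda>p'. dist q p') ` P) \<and>
          real t \<le> (40 * 33^DIM('a)) * (1 / \<epsilon>) ^ (DIM('a) + 1) * (1 + ln (spread P)) ^ 2)"
  proof (intro allI impI)
    fix P :: "'a set" and p :: "nat \<Rightarrow> 'a" and \<epsilon> :: real and q :: 'a
    assume h: "finite P \<and> card P \<ge> 2 \<and> 0 < \<epsilon> \<and> \<epsilon> < 1/2 \<and> greedy_perm P p"
    interpret G: GP P p \<epsilon> using h by unfold_locales auto
    have ex: "\<exists>r t. greedy_route P p \<epsilon> q 1 r t" using G.route_exists[of 1 q] h by simp
    have all: "p r \<in> P \<and>
          dist q (p r) \<le> (1 + \<epsilon>) * Min ((\<lambda>p'. dist q p') ` P) \<and>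
          real t \<le> (40 * 33^DIM('a)) * (1 / \<epsilon>) ^ (DIM('a) + 1) * (1 + ln (spread P)) ^ 2"
      if rt: "greedy_route P p \<epsilon> q 1 r t" for r t
    proof -
      have n1: "1 \<le> (1::nat)" "1 \<le> card P" using h by auto
      have b: "1 \<le> r \<and> r \<le> card P" using G.route_basic[OF rt n1] by simp
      then have pr: "p r \<in> P" using G.pin by simp
      have "\<not> (1+\<epsilon>) * G.rho q < dist q (p r)" using G.route_correct[OF rt n1 G.Inv1] .
      then have d: "dist q (p r) \<le> (1 + \<epsilon>) * Min ((\<lambda>p'. dist q p') ` P)"
        by (simp add: G.rho_def)
      show ?thesis using pr d G.final_time[OF rt] by simp
    qed
    show "(\<exists>r t. greedy_route P p \<epsilon> q 1 r t) \<and>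
       (\<forall>r t. greedy_route P p \<epsilon> q 1 r t \<longrightarrow>
          p r \<in> P \<and>
          dist q (p r) \<le> (1 + \<epsilon>) * Min ((\<lambda>p'. dist q p') ` P) \<and>
          real t \<le> (40 * 33^DIM('a)) * (1 / \<epsilon>) ^ (DIM('a) + 1) * (1 + ln (spread P)) ^ 2)"
      using ex all by blast
  qed
  show ?thesis using C0 main by blast
qed

end
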